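(* Let $\psi:\mathbb R^n\to\mathbb R$ be convex with $\psi(0)=0$ and $0\in\partial\psi(0)$. Let $t>0$, $S:=S(0,0,t)=\{x:\psi(x)\le t\}$, and $y\in S$. Then $$\partial\psi^*\Big(\tfrac12\big(t-\psi(y)\big)(S-y)^\circ\Big)\subset S.$$
   Context: $\psi^*$ is the Legendre transform, $\partial\psi^*(Z)=\bigcup_{z\in Z}\partial\psi^*(z)$. For a convex set $E$ containing $0$, $E^\circ=\{z: z\cdot x\le1\ \forall x\in E\}$ is its polar body and $aE^\circ=\{az:z\in E^\circ\}$. *)

theory Defs
  imports "HOL-Analysis.Analysis"
begin

definition legendre :: "('a::real_inner \<Rightarrow> real) \<Rightarrow> 'a \<Rightarrow> ereal" where
  "legendre f z = (SUP x. ereal (inner z x - f x))"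

definition subdiff :: "('a::real_inner \<Rightarrow> real) \<Rightarrow> 'a \<Rightarrow> 'a set" where
  "subdiff f x = {g. \<forall>y. f y \<ge> f x + inner g (y - x)}"

definition esubdiff :: "('a::real_inner \<Rightarrow> ereal) \<Rightarrow> 'a \<Rightarrow> 'a set" where
  "esubdiff f z = {x. \<bar>f z\<bar> \<noteq> \<infinity> \<and> (\<forall>w. f w \<ge> f z + ereal (inner (w - z) x))}"

definition polar :: "'a::real_inner set \<Rightarrow> 'a set" where
  "polar E = {z. \<forall>x\<in>E. inner z x \<le> 1}"

end

theory Submission
  imports Defs
begin

lemma fenchel_aux:
  fixes \<psi> :: "'a::euclidean_space \<Rightarrow> real"
  assumes cvx: "convex_on UNIV \<psi>"
    and L: "legendre \<psi> z = ereal L"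
    and sub: "\<forall>w. legendre \<psi> w \<ge> ereal L + ereal (inner (w - z) x)"
  shows "\<psi> u \<ge> \<psi> x + inner z (u - x)"
proof -
  have upper: "z \<bullet> u - \<psi> u \<le> L" for u
  proof -
    have "ereal (z \<bullet> u - \<psi> u) \<le> legendre \<psi> z"
      unfolding legendre_def by (rule SUP_upper) simp
    thus ?thesis using L by simp
  qed
  have key: "\<psi> x \<le> z \<bullet> x - L"
  proof (rule ccontr)
    assume nc: "\<not> ?thesis"
    define c where "c = z \<bullet> x - L"
    define E where "E = {p :: 'a \<times> real. \<psi> (fst p) \<le> snd p}"
    have cont: "continuous_on UNIV \<psi>"
      using convex_on_continuous[OF open_UNIV cvx] .
    have "closed E" unfolding E_def
      by (intro closed_Collect_le continuous_intros continuous_on_compose2[OF cont]) auto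
    have "convex E" unfolding convex_alt E_def
    proof (clarsimp)
      fix a r b s and u :: real
      assume h: "\<psi> a \<le> r" "\<psi> b \<le> s" "0 \<le> u" "u \<le> 1"
      have "\<psi> ((1 - u) *\<^sub>R a + u *\<^sub>R b) \<le> (1 - u) * \<psi> a + u * \<psi> b"
        using convex_onD[OF cvx, of u a b] h by simp
      also have "\<dots> \<le> (1 - u) * r + u * s"
        using h by (intro add_mono mult_left_mono) auto
      finally show "\<psi> ((1 - u) *\<^sub>R a + u *\<^sub>R b) \<le> (1 - u) * r + u * s" .
    qed
    have "(x, c) \<notin> E" using nc unfolding E_def c_def by auto
    then obtain ab b where sep: "inner ab (x, c) < b" "\<forall>p\<in>E. inner ab p > b"
      using separating_hyperplane_closed_point[OF \<open>convex E\<close> \<open>closed E\<close>] by blast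
    obtain a \<beta> where ab: "ab = (a, \<beta>)" by fastforce
    have s1: "a \<bullet> x + \<beta> * c < b" using sep(1) ab by (simp add: inner_Pair)
    have s2: "a \<bullet> u + \<beta> * \<psi> u > b" for u
      using sep(2)[rule_format, of "(u, \<psi> u)"] ab by (simp add: inner_Pair E_def)
    have "\<beta> * (\<psi> x - c) > 0" using s1 s2[of x] by (simp add: algebra_simps)
    moreover have "\<psi> x - c > 0" using nc c_def by simp
    ultimately have bpos: "\<beta> > 0" by (simp add: zero_less_mult_iff)
    define v where "v = (- 1 / \<beta>) *\<^sub>R a"
    have vu: "v \<bullet> u - \<psi> u \<le> - b / \<beta>" for u
    proof -
      have "b < a \<bullet> u + \<beta> * \<psi> u" using s2 .
      hence "b / \<beta> < (a \<bullet> u) / \<beta> + \<psi> u" using bpos by (simp add: field_simps)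
      thus ?thesis unfolding v_def by (simp add: field_simps)
    qed
    have "legendre \<psi> v \<le> ereal (- b / \<beta>)"
      unfolding legendre_def by (rule SUP_least) (use vu in simp)
    with sub have "ereal L + ereal (inner (v - z) x) \<le> ereal (- b / \<beta>)"
      using order_trans by blast
    hence "L + inner (v - z) x \<le> - b / \<beta>" by simp
    hence "L + v \<bullet> x - z \<bullet> x \<le> - b / \<beta>" by (simp add: inner_diff_left inner_diff_right inner_commute)
    hence "b / \<beta> \<le> - v \<bullet> x + c" unfolding c_def by simp
    hence "b / \<beta> \<le> (a \<bullet> x) / \<beta> + c" unfolding v_def by simp
    hence "b \<le> a \<bullet> x + \<beta> * c" using bpos by (simp add: field_simps)
    with s1 show False by simp
  qed
  have "\<psi> u \<ge> z \<bullet> u - L" using upper[of u] by simp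
  thus ?thesis using key by (simp add: inner_diff_right)
qed

theorem mainTheorem13:
  fixes \<psi> :: "'a::euclidean_space \<Rightarrow> real" and t :: real and y :: 'a
  assumes "convex_on UNIV \<psi>"
    and "\<psi> 0 = 0"
    and "0 \<in> subdiff \<psi> 0"
    and "t > 0"
    and "y \<in> {x. \<psi> x \<le> t}"
  shows "(\<Union>z \<in> (\<lambda>w. ((t - \<psi> y) / 2) *\<^sub>R w) ` polar ((\<lambda>x. x - y) ` {x. \<psi> x \<le> t}).
            esubdiff (legendre \<psi>) z) \<subseteq> {x. \<psi> x \<le> t}"
proof
  fix x assume "x \<in> (\<Union>z \<in> (\<lambda>w. ((t - \<psi> y) / 2) *\<^sub>R w) ` polar ((\<lambda>x. x - y) ` {x. \<psi> x \<le> t}).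
            esubdiff (legendre \<psi>) z)"
  then obtain w where w: "w \<in> polar ((\<lambda>x. x - y) ` {x. \<psi> x \<le> t})"
    and xs: "x \<in> esubdiff (legendre \<psi>) (((t - \<psi> y) / 2) *\<^sub>R w)" by blast
  define z where "z = ((t - \<psi> y) / 2) *\<^sub>R w"
  have fin: "\<bar>legendre \<psi> z\<bar> \<noteq> \<infinity>" and sub: "\<forall>v. legendre \<psi> v \<ge> legendre \<psi> z + ereal (inner (v - z) x)"
    using xs unfolding esubdiff_def z_def by auto
  obtain L where L: "legendre \<psi> z = ereal L" using fin by (cases "legendre \<psi> z") auto
  have sg: "\<psi> u \<ge> \<psi> x + inner z (u - x)" for u
    using fenchel_aux[OF assms(1) L] sub L by simp
  have wp: "\<psi> p \<le> t \<Longrightarrow> inner w (p - y) \<le> 1" for p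
    using w unfolding polar_def by auto
  have yS: "\<psi> y \<le> t" using assms(5) by simp
  show "x \<in> {x. \<psi> x \<le> t}"
  proof (rule ccontr)
    assume "x \<notin> {x. \<psi> x \<le> t}"
    hence xt: "\<psi> x > t" by simp
    define d where "d = t - \<psi> y"
    define D where "D = \<psi> x - \<psi> y"
    define q where "q = inner w (x - y)"
    define s where "s = d / D"
    have d0: "d \<ge> 0" and Dd: "D > d" using yS xt d_def D_def by auto
    have s0: "s \<ge> 0" and s1: "s \<le> 1" using d0 Dd unfolding s_def by auto
    have "\<psi> ((1 - s) *\<^sub>R y + s *\<^sub>R x) \<le> (1 - s) * \<psi> y + s * \<psi> x"
      using convex_onD[OF assms(1), of s y x] s0 s1 by simp
    also have "\<dots> = \<psi> y + s * D" by (simp add: D_def algebra_simps)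
    also have "\<dots> = t" using Dd d0 unfolding s_def d_def by simp
    finally have "inner w (((1 - s) *\<^sub>R y + s *\<^sub>R x) - y) \<le> 1" by (rule wp)
    hence "s * q \<le> 1" unfolding q_def by (simp add: algebra_simps inner_diff_right)
    hence dq: "d * q \<le> D" using Dd d0 unfolding s_def by (simp add: field_simps)
    have "\<psi> y \<ge> \<psi> x + inner z (y - x)" by (rule sg)
    hence "\<psi> y \<ge> \<psi> x - (d / 2) * q" unfolding z_def d_def q_def
      by (simp add: inner_diff_right algebra_simps) (simp add: field_simps)
    hence "D \<le> d * q / 2" unfolding D_def by simp
    with dq Dd d0 show False by simp
  qed
qed

end
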